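(* Let $\langle L,\leq\rangle$ and $\langle K,\leq\rangle$ be complete lattices and $f:L\to K$ a surjective lattice morphism. Let $O:L\to L$ be an operator and $A:L^2\to L^2$ an approximator of $O$ such that both $O$ and $A$ respect $f$, and let $O_f$ and $A_f$ be their projections on $K$. If $(x,y)$ is the $A$-well-founded fixpoint of $O$, then $(f(x),f(y))$ is the $A_f$-well-founded fixpoint of $O_f$.
   Context: A lattice morphism $f:L\to K$ satisfies $f(\bigvee X)=\bigvee f(X)$ and $f(\bigwedge X)=\bigwedge f(X)$ for all $X\subseteq L$. $L^2$ carries the precision order $(x,y)\leq_p(u,v)$ iff $x\leq u$ and $v\leq y$; write $(x,y)_1=x,(x,y)_2=y$. An approximator of $O$ is a $\leq_p$-monotone $A:L^2\to L^2$ with $A(x,x)_1\leq O(x)\leq A(x,x)_2$ for all $x$, assumed symmetric ($A(x,y)_1=A(y,x)_2$). $O$ respects $f$ if $f(x)=f(y)$ implies $f(O(x))=f(O(y))$; then (for surjective $f$) $O_f$ is the unique operator on $K$ with $O_f\circ f=f\circ O$. With $f^2(x,y)=(f(x),f(y))$, $A$ respects $f$ if $f^2(p)=f^2(q)$ implies $f^2(A(p))=f^2(A(q))$; $A_f$ is the unique operator on $K^2$ with $A_f\circ f^2=f^2\circ A$. For an operator $B$ on a bilattice $M^2$ (and any operator $P$ on $M$), a partial $B$-stable fixpoint is a pair $(x,y)$ with $x=\mathrm{lfp}(B(\cdot,y)_1)$ and $y=\mathrm{lfp}(B(x,\cdot)_2)$; the $B$-well-founded fixpoint of $P$ is the $\leq_p$-least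 (least precise) partial $B$-stable fixpoint. *)

theory Defs
  imports Main
begin

definition lattice_morphism :: "('a::complete_lattice \<Rightarrow> 'b::complete_lattice) \<Rightarrow> bool" where
  "lattice_morphism f \<longleftrightarrow>
     (\<forall>X. f (Sup X) = Sup (f ` X)) \<and> (\<forall>X. f (Inf X) = Inf (f ` X))"

definition leq_p :: "('a::complete_lattice \<times> 'a) \<Rightarrow> ('a \<times> 'a) \<Rightarrow> bool" where
  "leq_p p q \<longleftrightarrow> fst p \<le> fst q \<and> snd q \<le> snd p"

definition approximator :: "('a::complete_lattice \<times> 'a \<Rightarrow> 'a \<times> 'a) \<Rightarrow> ('a \<Rightarrow> 'a) \<Rightarrow> bool" where
  "approximator A Op \<longleftrightarrow>
     (\<forall>p q. leq_p p q \<longrightarrow> leq_p (A p) (A q)) \<and>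
     (\<forall>x. fst (A (x, x)) \<le> Op x \<and> Op x \<le> snd (A (x, x)))"

definition symmetric_approx :: "('a \<times> 'a \<Rightarrow> 'a \<times> 'a) \<Rightarrow> bool" where
  "symmetric_approx A \<longleftrightarrow> (\<forall>x y. fst (A (x, y)) = snd (A (y, x)))"

definition op_respects :: "('a \<Rightarrow> 'a) \<Rightarrow> ('a \<Rightarrow> 'b) \<Rightarrow> bool" where
  "op_respects Op f \<longleftrightarrow> (\<forall>x y. f x = f y \<longrightarrow> f (Op x) = f (Op y))"

definition sq_map :: "('a \<Rightarrow> 'b) \<Rightarrow> 'a \<times> 'a \<Rightarrow> 'b \<times> 'b" where
  "sq_map f p = (f (fst p), f (snd p))"

definition approx_respects :: "('a \<times> 'a \<Rightarrow> 'a \<times> 'a) \<Rightarrow> ('a \<Rightarrow> 'b) \<Rightarrow> bool" where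
  "approx_respects A f \<longleftrightarrow> (\<forall>p q. sq_map f p = sq_map f q \<longrightarrow> sq_map f (A p) = sq_map f (A q))"

definition proj_op :: "('a \<Rightarrow> 'b) \<Rightarrow> ('a \<Rightarrow> 'a) \<Rightarrow> ('b \<Rightarrow> 'b)" where
  "proj_op f Op = (THE P. P \<circ> f = f \<circ> Op)"

definition proj_approx :: "('a \<Rightarrow> 'b) \<Rightarrow> ('a \<times> 'a \<Rightarrow> 'a \<times> 'a) \<Rightarrow> ('b \<times> 'b \<Rightarrow> 'b \<times> 'b)" where
  "proj_approx f A = (THE B. B \<circ> sq_map f = sq_map f \<circ> A)"

definition partial_stable_fp :: "('a::complete_lattice \<times> 'a \<Rightarrow> 'a \<times> 'a) \<Rightarrow> 'a \<times> 'a \<Rightarrow> bool" where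
  "partial_stable_fp B p \<longleftrightarrow>
     fst p = lfp (\<lambda>z. fst (B (z, snd p))) \<and> snd p = lfp (\<lambda>z. snd (B (fst p, z)))"

text \<open>The B-well-founded fixpoint (of any operator P; it does not depend on P):
  the leq_p-least partial B-stable fixpoint.\<close>
definition wf_fixpoint :: "('a::complete_lattice \<times> 'a \<Rightarrow> 'a \<times> 'a) \<Rightarrow> 'a \<times> 'a \<Rightarrow> bool" where
  "wf_fixpoint B p \<longleftrightarrow> partial_stable_fp B p \<and> (\<forall>q. partial_stable_fp B q \<longrightarrow> leq_p p q)"

end

theory Submission
  imports Defs
begin

lemma mor_sup: assumes "lattice_morphism f" shows "f (sup a b) = sup (f a) (f b)"
proof -
  have "f (Sup {a,b}) = Sup (f ` {a,b})" using assms unfolding lattice_morphism_def by blast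
  thus ?thesis by simp
qed

lemma mor_inf: assumes "lattice_morphism f" shows "f (inf a b) = inf (f a) (f b)"
proof -
  have "f (Inf {a,b}) = Inf (f ` {a,b})" using assms unfolding lattice_morphism_def by blast
  thus ?thesis by simp
qed

lemma mor_mono: assumes "lattice_morphism f" "a \<le> b" shows "f a \<le> f b"
proof -
  have "f b = sup (f a) (f b)" using mor_sup[OF assms(1), of a b] assms(2) by (simp add: sup_absorb2)
  thus ?thesis by (metis sup.cobounded1)
qed

lemma lfp_proj:
  fixes f :: "'a::complete_lattice \<Rightarrow> 'b::complete_lattice"
  assumes m: "lattice_morphism f" and s: "surj f" and g: "mono g" and c: "\<And>z. h (f z) = f (g z)"
  shows "f (lfp g) = lfp h"
proof -
  have hm: "mono h"
  proof (rule monoI)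
    fix u v :: 'b assume uv: "u \<le> v"
    obtain a b where ab: "u = f a" "v = f b" using s by (metis surjD)
    have fi: "f (inf a b) = u" using mor_inf[OF m, of a b] ab uv by (simp add: inf_absorb1)
    have "h u = f (g (inf a b))" using c fi by metis
    also have "\<dots> \<le> f (g b)" using mor_mono[OF m] g by (simp add: monoD)
    also have "\<dots> = h v" using c ab by simp
    finally show "h u \<le> h v" .
  qed
  have fx: "h (f (lfp g)) = f (lfp g)" using c lfp_unfold[OF g] by metis
  have least: "f (lfp g) \<le> k" if hk: "h k \<le> k" for k
  proof -
    define M where "M = Sup {z. f z \<le> k}"
    have "f M = Sup (f ` {z. f z \<le> k})" using m unfolding lattice_morphism_def M_def by blast
    also have "\<dots> \<le> k" by (auto intro: Sup_least)
    finally have fM: "f M \<le> k" .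
    have "f (g M) = h (f M)" using c by simp
    also have "\<dots> \<le> h k" using hm fM by (simp add: monoD)
    finally have "f (g M) \<le> k" using hk by simp
    then have "g M \<le> M" unfolding M_def by (simp add: Sup_upper)
    then have "lfp g \<le> M" by (rule lfp_lowerbound)
    thus ?thesis using mor_mono[OF m] fM order_trans by blast
  qed
  show ?thesis
    by (rule antisym) (auto intro: lfp_greatest least lfp_lowerbound simp: fx)
qed

lemma proj_approx_eq:
  assumes s: "surj f" and r: "approx_respects A f"
  shows "proj_approx f A (sq_map f p) = sq_map f (A p)"
proof -
  define B0 where "B0 q = sq_map f (A (SOME p. sq_map f p = q))" for q
  have P: "B0 \<circ> sq_map f = sq_map f \<circ> A"
  proof
    fix p
    have e: "sq_map f (SOME p'. sq_map f p' = sq_map f p) = sq_map f p" by (rule someI) simp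
    have "sq_map f (A (SOME p'. sq_map f p' = sq_map f p)) = sq_map f (A p)"
      using r e unfolding approx_respects_def by metis
    thus "(B0 \<circ> sq_map f) p = (sq_map f \<circ> A) p"
      unfolding B0_def by simp
  qed
  have sq: "\<exists>p. q = sq_map f p" for q
  proof -
    obtain a b where "fst q = f a" "snd q = f b" using s by (metis surjD)
    thus ?thesis by (intro exI[of _ "(a,b)"]) (simp add: sq_map_def prod_eq_iff)
  qed
  have "proj_approx f A = B0"
    unfolding proj_approx_def
  proof (rule the_equality[where P="\<lambda>B. B \<circ> sq_map f = sq_map f \<circ> A", OF P])
    fix B1 assume B1: "B1 \<circ> sq_map f = sq_map f \<circ> A"
    show "B1 = B0"
    proof
      fix q obtain p where "q = sq_map f p" using sq by blast
      thus "B1 q = B0 q" using fun_cong[OF B1, of p] fun_cong[OF P, of p] by simp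
    qed
  qed
  thus ?thesis using fun_cong[OF P, of p] by simp
qed

lemma leq_p_trans: "leq_p p q \<Longrightarrow> leq_p q r \<Longrightarrow> leq_p p r"
  unfolding leq_p_def by auto

lemma leq_p_antisym: "leq_p p q \<Longrightarrow> leq_p q p \<Longrightarrow> p = q"
  unfolding leq_p_def by (auto simp: prod_eq_iff)

theorem theorem3p4:
  fixes f :: "'a::complete_lattice \<Rightarrow> 'b::complete_lattice"
    and Op :: "'a \<Rightarrow> 'a" and A :: "'a \<times> 'a \<Rightarrow> 'a \<times> 'a" and x y :: 'a
  assumes "lattice_morphism f" and "surj f"
    and "approximator A Op" and "symmetric_approx A"
    and "op_respects Op f" and "approx_respects A f"
    and "wf_fixpoint A (x, y)"
  shows "wf_fixpoint (proj_approx f A) (f x, f y)"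
proof -
  note m = assms(1) and s = assms(2)
  define B where "B = proj_approx f A"
  have Bf: "B (f a, f b) = (f (fst (A (a,b))), f (snd (A (a,b))))" for a b
    using proj_approx_eq[OF s assms(6), of "(a,b)"] unfolding B_def sq_map_def by simp
  have Am: "leq_p p q \<Longrightarrow> leq_p (A p) (A q)" for p q
    using assms(3) unfolding approximator_def by blast
  have Bm: "leq_p (B p) (B q)" if pq: "leq_p p q" for p q
  proof -
    obtain a b c d where ab: "p = (f a, f b)" "q = (f c, f d)" using s
      by (metis prod.collapse surjD)
    have e1: "f (sup a c) = f c" using pq ab mor_sup[OF m, of a c] unfolding leq_p_def
      by (simp add: sup_absorb2)
    have e2: "f (sup b d) = f b" using pq ab mor_sup[OF m, of b d] unfolding leq_p_def
      by (simp add: sup_absorb1)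
    have "leq_p (A (a, sup b d)) (A (sup a c, d))" by (rule Am) (simp add: leq_p_def)
    hence "leq_p (B (f a, f (sup b d))) (B (f (sup a c), f d))"
      unfolding Bf leq_p_def using mor_mono[OF m] by auto
    thus ?thesis using ab e1 e2 by simp
  qed
  define S where "S p = (lfp (\<lambda>z. fst (A (z, snd p))), lfp (\<lambda>z. snd (A (fst p, z))))" for p
  define SB where "SB p = (lfp (\<lambda>z. fst (B (z, snd p))), lfp (\<lambda>z. snd (B (fst p, z))))" for p
  have stA: "partial_stable_fp A p \<longleftrightarrow> S p = p" for p
    unfolding partial_stable_fp_def S_def by (auto simp: prod_eq_iff)
  have stB: "partial_stable_fp B p \<longleftrightarrow> SB p = p" for p
    unfolding partial_stable_fp_def SB_def by (auto simp: prod_eq_iff)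
  have m1: "mono (\<lambda>z. fst (A (z, b)))" for b
    by (rule monoI) (use Am in \<open>auto simp: leq_p_def\<close>)
  have m2: "mono (\<lambda>z. snd (A (a, z)))" for a
    by (rule monoI) (use Am in \<open>auto simp: leq_p_def\<close>)
  have comm: "sq_map f (S (a,b)) = SB (f a, f b)" for a b
  proof -
    have "f (lfp (\<lambda>z. fst (A (z, b)))) = lfp (\<lambda>z. fst (B (z, f b)))"
      by (rule lfp_proj[OF m s m1]) (simp add: Bf)
    moreover have "f (lfp (\<lambda>z. snd (A (a, z)))) = lfp (\<lambda>z. snd (B (f a, z)))"
      by (rule lfp_proj[OF m s m2]) (simp add: Bf)
    ultimately show ?thesis unfolding S_def SB_def sq_map_def by simp
  qed
  have wf: "partial_stable_fp A (x,y)" "\<And>q. partial_stable_fp A q \<Longrightarrow> leq_p (x,y) q"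
    using assms(7) unfolding wf_fixpoint_def by auto
  have st1: "partial_stable_fp B (f x, f y)"
    using comm[of x y] wf(1) unfolding stA stB sq_map_def by simp
  have Smono: "leq_p (S p) (S q)" if "leq_p p q" for p q
  proof -
    have "fst (S p) \<le> fst (S q)" unfolding S_def
      by (simp, rule lfp_mono) (use that Am in \<open>auto simp: leq_p_def\<close>)
    moreover have "snd (S q) \<le> snd (S p)" unfolding S_def
      by (simp, rule lfp_mono) (use that Am in \<open>auto simp: leq_p_def\<close>)
    ultimately show ?thesis by (simp add: leq_p_def)
  qed
  define P where "P = {p. leq_p (S p) p}"
  define M where "M = (Inf (fst ` P), Sup (snd ` P))"
  have Mle: "leq_p M p" if "p \<in> P" for p
    using that unfolding M_def leq_p_def by (auto intro: Inf_lower Sup_upper)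
  have SM: "leq_p (S M) M"
  proof -
    have "fst (S M) \<le> Inf (fst ` P)"
    proof (rule Inf_greatest)
      fix z assume "z \<in> fst ` P" then obtain p where p: "p \<in> P" "z = fst p" by auto
      have "leq_p (S M) p" using leq_p_trans[OF Smono[OF Mle[OF p(1)]]] p P_def by auto
      thus "fst (S M) \<le> z" using p by (simp add: leq_p_def)
    qed
    moreover have "Sup (snd ` P) \<le> snd (S M)"
    proof (rule Sup_least)
      fix z assume "z \<in> snd ` P" then obtain p where p: "p \<in> P" "z = snd p" by auto
      have "leq_p (S M) p" using leq_p_trans[OF Smono[OF Mle[OF p(1)]]] p P_def by auto
      thus "z \<le> snd (S M)" using p by (simp add: leq_p_def)
    qed
    ultimately show ?thesis unfolding M_def leq_p_def by simp
  qed
  have "S M \<in> P" using Smono[OF SM] P_def by simp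
  hence "leq_p M (S M)" by (rule Mle)
  hence "S M = M" using SM leq_p_antisym by blast
  hence xyM: "leq_p (x,y) M" using wf(2) stA by blast
  have least: "leq_p (f x, f y) q" if q: "partial_stable_fp B q" for q
  proof -
    obtain u v where uv: "q = (u,v)" by (cases q)
    define a where "a = Sup {z. f z \<le> u}"
    define b where "b = Inf {z. v \<le> f z}"
    have fa: "f a \<le> u"
    proof -
      have "f a = Sup (f ` {z. f z \<le> u})" using m unfolding lattice_morphism_def a_def by blast
      also have "\<dots> \<le> u" by (auto intro: Sup_least)
      finally show ?thesis .
    qed
    have fb: "v \<le> f b"
    proof -
      have "f b = Inf (f ` {z. v \<le> f z})" using m unfolding lattice_morphism_def b_def by blast
      moreover have "v \<le> Inf (f ` {z. v \<le> f z})" by (auto intro: Inf_greatest)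
      ultimately show ?thesis by simp
    qed
    have qs: "SB (u,v) = (u,v)" using q uv stB by simp
    have "f (fst (S (a,b))) = lfp (\<lambda>z. fst (B (z, f b)))"
      using comm[of a b] unfolding sq_map_def SB_def by simp
    also have "\<dots> \<le> lfp (\<lambda>z. fst (B (z, v)))"
      by (rule lfp_mono) (use Bm fb in \<open>auto simp: leq_p_def\<close>)
    also have "\<dots> = u" using qs unfolding SB_def by simp
    finally have c1: "fst (S (a,b)) \<le> a" unfolding a_def by (simp add: Sup_upper)
    have "v = lfp (\<lambda>z. snd (B (u, z)))" using qs unfolding SB_def by simp
    also have "\<dots> \<le> lfp (\<lambda>z. snd (B (f a, z)))"
      by (rule lfp_mono) (use Bm fa in \<open>auto simp: leq_p_def\<close>)
    also have "\<dots> = f (snd (S (a,b)))"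
      using comm[of a b] unfolding sq_map_def SB_def by simp
    finally have "b \<le> snd (S (a,b))" unfolding b_def by (simp add: Inf_lower)
    with c1 have "(a,b) \<in> P" unfolding P_def leq_p_def by simp
    hence "leq_p (x,y) (a,b)" using leq_p_trans[OF xyM Mle] by blast
    hence "x \<le> a" "b \<le> y" by (auto simp: leq_p_def)
    hence "f x \<le> u" "v \<le> f y" using mor_mono[OF m] fa fb order_trans by blast+
    thus ?thesis using uv by (simp add: leq_p_def)
  qed
  show ?thesis unfolding wf_fixpoint_def B_def[symmetric] using st1 least by blast
qed

end
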